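(* There is some $d_0$ such that the following holds for every $d\geq d_0$. Let $G$ be a finite bipartite graph with vertex classes $A$ and $B$ such that $|A|\geq |B|$, $d_G(x,y)\leq d^{1/5}$ for all distinct $x,y\in B$, $d_G(x)\leq d$ for every $x\in A$, and $d(G)\geq d^{3/4}$. Then $G$ contains a $C_4$-free subgraph with average degree at least $d^{1/4}$.
   Context: $d(G)=2e(G)/|V(G)|$ is the average degree; $d_G(x)$ is the degree of $x$; the codegree $d_G(x,y)$ is the number of common neighbours of $x$ and $y$ in $G$. A graph is $C_4$-free if it contains no $4$-cycle as a subgraph. *)

theory Defs
  imports Complex_Main
begin

definition graph :: "'a set \<Rightarrow> 'a set set \<Rightarrow> bool" where
  "graph V E \<longleftrightarrow> finite V \<and> (\<forall>e\<in>E. e \<subseteq> V \<and> (\<exists>x y. x \<noteq> y \<and> e = {x, y}))"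

definition degree :: "'a set set \<Rightarrow> 'a \<Rightarrow> nat" where
  "degree E x = card {y. {x, y} \<in> E}"

definition codegree :: "'a set set \<Rightarrow> 'a \<Rightarrow> 'a \<Rightarrow> nat" where
  "codegree E x y = card {z. {x, z} \<in> E \<and> {y, z} \<in> E}"

definition avg_degree :: "'a set \<Rightarrow> 'a set set \<Rightarrow> real" where
  "avg_degree V E = 2 * real (card E) / real (card V)"

definition bipartite_with :: "'a set \<Rightarrow> 'a set set \<Rightarrow> 'a set \<Rightarrow> 'a set \<Rightarrow> bool" where
  "bipartite_with V E A B \<longleftrightarrow> A \<union> B = V \<and> A \<inter> B = {} \<and>
     (\<forall>e\<in>E. \<exists>a\<in>A. \<exists>b\<in>B. e = {a, b})"

definition subgraph :: "'a set \<Rightarrow> 'a set set \<Rightarrow> 'a set \<Rightarrow> 'a set set \<Rightarrow> bool" where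
  "subgraph V' E' V E \<longleftrightarrow> V' \<subseteq> V \<and> E' \<subseteq> E \<and> (\<forall>e\<in>E'. e \<subseteq> V')"

definition C4_free :: "'a set set \<Rightarrow> bool" where
  "C4_free E \<longleftrightarrow> \<not> (\<exists>a b c d. distinct [a, b, c, d] \<and>
      {a, b} \<in> E \<and> {b, c} \<in> E \<and> {c, d} \<in> E \<and> {d, a} \<in> E)"

end

theory Submission
  imports Defs "HOL-Real_Asymp.Real_Asymp" "HOL-Library.Discrete_Functions"
begin


definition wt :: "'a set \<Rightarrow> ('a \<Rightarrow> real) \<Rightarrow> 'a set \<Rightarrow> real" where
  "wt S w T = (\<Prod>x\<in>T. w x) * (\<Prod>x\<in>S-T. 1 - w x)"

lemma wt_nonneg: "(\<And>x. x \<in> S \<Longrightarrow> 0 \<le> w x \<and> w x \<le> 1) \<Longrightarrow> T \<subseteq> S \<Longrightarrow> 0 \<le> wt S w T"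
  unfolding wt_def
  by (intro mult_nonneg_nonneg prod_nonneg) (auto simp: subset_iff)

lemma wt_sup:
  assumes "finite S"
  shows "U \<subseteq> S \<Longrightarrow> (\<Sum>T\<in>Pow S. wt S w T * of_bool (U \<subseteq> T)) = (\<Prod>x\<in>U. w x)"
  using assms
proof (induction S arbitrary: U rule: finite_induct)
  case empty
  then show ?case by (simp add: wt_def)
next
  case (insert x F)
  have inj: "inj_on (insert x) (Pow F)" using insert(2)
    by (smt (verit, best) PowD inj_on_def insert_ident subset_iff)
  have disj: "Pow F \<inter> insert x ` Pow F = {}" using insert(2) by auto
  have w1: "wt (insert x F) w T = (1 - w x) * wt F w T" if "T \<subseteq> F" for T
  proof -
    have "insert x F - T = insert x (F - T)" using that insert(2) by auto
    then show ?thesis unfolding wt_def using insert(1,2) that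
      by (simp add: prod.insert_remove algebra_simps)
  qed
  have w2: "wt (insert x F) w (insert x T) = w x * wt F w T" if "T \<subseteq> F" for T
  proof -
    have "insert x F - insert x T = F - T" using that insert(2) by auto
    moreover have "finite T" using that insert(1) finite_subset by blast
    moreover have "x \<notin> T" using that insert(2) by auto
    ultimately show ?thesis unfolding wt_def by simp
  qed
  have "(\<Sum>T\<in>Pow (insert x F). wt (insert x F) w T * of_bool (U \<subseteq> T))
     = (\<Sum>T\<in>Pow F. wt (insert x F) w T * of_bool (U \<subseteq> T))
     + (\<Sum>T\<in>Pow F. wt (insert x F) w (insert x T) * of_bool (U \<subseteq> insert x T))"
    unfolding Pow_insert
    by (subst sum.union_disjoint) (use insert(1) disj inj in \<open>auto simp: sum.reindex simp del: sum_mult_of_bool_eq\<close>)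
  also have "\<dots> = (1 - w x) * (\<Sum>T\<in>Pow F. wt F w T * of_bool (U \<subseteq> T))
     + w x * (\<Sum>T\<in>Pow F. wt F w T * of_bool (U - {x} \<subseteq> T))"
    by (simp add: sum_distrib_left w1 w2 mult.assoc Diff_subset_conv del: sum_mult_of_bool_eq)
  also have "\<dots> = (\<Prod>x\<in>U. w x)"
  proof (cases "x \<in> U")
    case True
    have "(\<Sum>T\<in>Pow F. wt F w T * of_bool (U \<subseteq> T)) = 0"
      using True insert(2) by (intro sum.neutral) (auto simp del: sum_mult_of_bool_eq)
    moreover have "(\<Sum>T\<in>Pow F. wt F w T * of_bool (U - {x} \<subseteq> T)) = (\<Prod>x\<in>U - {x}. w x)"
      using insert.prems by (intro insert.IH) auto
    moreover have "finite U" using insert.prems insert(1) finite_subset by blast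
    ultimately show ?thesis using True by (simp add: prod.remove)
  next
    case False
    then have "U - {x} = U" "U \<subseteq> F" using insert.prems by auto
    then show ?thesis using insert.IH[of U] by (simp add: algebra_simps)
  qed
  finally show ?case .
qed

lemma wt_count:
  assumes "finite S" "finite D" "\<And>y. y \<in> D \<Longrightarrow> g y \<subseteq> S"
  shows "(\<Sum>T\<in>Pow S. wt S w T * real (card {y\<in>D. g y \<subseteq> T})) = (\<Sum>y\<in>D. \<Prod>x\<in>g y. w x)"
proof -
  have "(\<Sum>T\<in>Pow S. wt S w T * real (card {y\<in>D. g y \<subseteq> T}))
      = (\<Sum>T\<in>Pow S. \<Sum>y\<in>D. wt S w T * of_bool (g y \<subseteq> T))"
  proof (rule sum.cong[OF refl])
    fix T
    have "real (card {y\<in>D. g y \<subseteq> T}) = (\<Sum>y\<in>D. of_bool (g y \<subseteq> T))"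
      using assms(2) by (simp add: Collect_conj_eq Int_commute)
    then show "wt S w T * real (card {y\<in>D. g y \<subseteq> T}) = (\<Sum>y\<in>D. wt S w T * of_bool (g y \<subseteq> T))"
      by (simp add: sum_distrib_left del: sum_mult_of_bool_eq sum_of_bool_eq)
  qed
  also have "\<dots> = (\<Sum>y\<in>D. \<Sum>T\<in>Pow S. wt S w T * of_bool (g y \<subseteq> T))"
    by (rule sum.swap)
  also have "\<dots> = (\<Sum>y\<in>D. \<Prod>x\<in>g y. w x)"
    using assms by (intro sum.cong refl wt_sup) auto
  finally show ?thesis .
qed



lemma edgeAB:
  assumes "bipartite_with V E A B" "{x,y} \<in> E"
  shows "(x \<in> A \<and> y \<in> B) \<or> (x \<in> B \<and> y \<in> A)"
proof -
  obtain a b where "a \<in> A" "b \<in> B" "{x,y} = {a,b}"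
    using assms unfolding bipartite_with_def by blast
  then show ?thesis by (auto simp: doubleton_eq_iff)
qed

lemma core:
  fixes V :: "'a set" and lam K c p q :: real
  assumes G: "graph V E" and bip: "bipartite_with V E A B"
    and cod: "\<forall>x\<in>B. \<forall>y\<in>B. x \<noteq> y \<longrightarrow> real (codegree E x y) \<le> lam"
    and AiA: "Ai \<subseteq> A" and Kpos: "K > 0"
    and degs: "\<forall>a\<in>Ai. K \<le> real (degree E a) \<and> real (degree E a) < 2 * K"
    and lampos: "lam \<ge> 0" and cpos: "c \<ge> 0" and p01: "0 \<le> p" "p \<le> 1" and q01: "0 \<le> q" "q \<le> 1"
    and obj: "p * q * (\<Sum>a\<in>Ai. real (degree E a)) - p^2 * q^2 * (4 * K * lam * (\<Sum>a\<in>Ai. real (degree E a)))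
              - c * (p * (\<Sum>a\<in>Ai. real (degree E a)) / K + q * real (card B)) > 0"
  shows "\<exists>V' E'. subgraph V' E' V E \<and> C4_free E' \<and> avg_degree V' E' \<ge> 2 * c"
proof -
  define X where "X = (\<Sum>a\<in>Ai. real (degree E a))"
  define N where "N a = {y. {a,y} \<in> E}" for a
  define S where "S = Ai \<union> B"
  define w where "w x = (if x \<in> A then p else q)" for x
  define ES where "ES T = {e\<in>E. e \<subseteq> T}" for T
  define Q where "Q = {(a,b,c,d). distinct [a,b,c,d] \<and> {a,b}\<in>E \<and> {b,c}\<in>E \<and> {c,d}\<in>E \<and> {d,a}\<in>E \<and> {a,b,c,d} \<subseteq> S}"
  define g where "g y = (case y of (a,b,c,d) \<Rightarrow> {a,b,c,d})" for y :: "'a \<times> 'a \<times> 'a \<times> 'a"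
  define \<Phi> where "\<Phi> T = real (card (ES T)) - real (card {y\<in>Q. g y \<subseteq> T}) - c * real (card T)" for T
  have finV: "finite V" using G unfolding graph_def by auto
  have EV: "e \<subseteq> V" if "e \<in> E" for e using G that unfolding graph_def by auto
  have finE: "finite E" by (rule finite_subset[of E "Pow V"]) (use EV finV in auto)
  have ABV: "A \<union> B = V" "A \<inter> B = {}" using bip unfolding bipartite_with_def by auto
  have bipE: "\<forall>e\<in>E. \<exists>a\<in>A. \<exists>b\<in>B. e = {a, b}" using bip unfolding bipartite_with_def by auto
  have AnB: "x \<in> A \<Longrightarrow> x \<notin> B" for x using ABV(2) by auto
  have finA: "finite A" and finB: "finite B" using ABV finV by auto
  have SV: "S \<subseteq> V" using AiA ABV unfolding S_def by auto
  have finS: "finite S" using SV finV finite_subset by blast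
  have finQ: "finite Q"
  proof -
    have "Q \<subseteq> S \<times> S \<times> S \<times> S" unfolding Q_def by auto
    then show ?thesis using finS by (simp add: finite_subset)
  qed
  have finN: "finite (N a)" for a
  proof -
    have "N a \<subseteq> V" unfolding N_def using EV by auto
    then show ?thesis using finV finite_subset by blast
  qed
  have degN: "degree E a = card (N a)" for a unfolding degree_def N_def by simp
  have w01: "0 \<le> w x \<and> w x \<le> 1" for x using p01 q01 unfolding w_def by auto
  have NB: "b \<in> B" if "a \<in> A" "b \<in> N a" for a b
    using edgeAB[OF bip, of a b] that ABV unfolding N_def by auto
  have wone: "(\<Sum>T\<in>Pow S. wt S w T) = 1"
    using wt_sup[OF finS, of "{}" w] by simp
  have e1: "(\<Sum>T\<in>Pow S. wt S w T * real (card (ES T))) = p * q * real (card (ES S))"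
  proof -
    have "(\<Sum>T\<in>Pow S. wt S w T * real (card (ES T))) = (\<Sum>T\<in>Pow S. wt S w T * real (card {y\<in>ES S. id y \<subseteq> T}))"
    proof (intro sum.cong refl)
      fix T assume "T \<in> Pow S"
      then have "ES T = {y\<in>ES S. id y \<subseteq> T}" unfolding ES_def by auto
      then show "wt S w T * real (card (ES T)) = wt S w T * real (card {y\<in>ES S. id y \<subseteq> T})" by simp
    qed
    also have "\<dots> = (\<Sum>y\<in>ES S. \<Prod>x\<in>id y. w x)"
      by (rule wt_count) (use finS finE in \<open>auto simp: ES_def\<close>)
    also have "\<dots> = (\<Sum>y\<in>ES S. p * q)"
    proof (intro sum.cong refl)
      fix y assume y: "y \<in> ES S"
      then have "y \<in> E" unfolding ES_def by simp
      then obtain a b where ab: "a \<in> A" "b \<in> B" "y = {a,b}"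
        using bipE by blast
      then have "a \<noteq> b" "b \<notin> A" using ABV(2) by auto
      then show "(\<Prod>x\<in>id y. w x) = p * q" using ab unfolding w_def by simp
    qed
    finally show ?thesis by simp
  qed
  have e2: "(\<Sum>T\<in>Pow S. wt S w T * real (card {y\<in>Q. g y \<subseteq> T})) = p^2 * q^2 * real (card Q)"
  proof -
    have "(\<Sum>T\<in>Pow S. wt S w T * real (card {y\<in>Q. g y \<subseteq> T})) = (\<Sum>y\<in>Q. \<Prod>x\<in>g y. w x)"
      by (rule wt_count) (use finS finQ in \<open>auto simp: Q_def g_def\<close>)
    also have "\<dots> = (\<Sum>y\<in>Q. p^2 * q^2)"
    proof (intro sum.cong refl)
      fix y assume y: "y \<in> Q"
      obtain a b c d where y0: "y = (a,b,c,d)" by (cases y) auto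
      then have y': "distinct [a,b,c,d]" "{a,b}\<in>E" "{b,c}\<in>E" "{c,d}\<in>E"
        using y unfolding Q_def by auto
      have "(a \<in> A \<and> b \<in> B \<and> c \<in> A \<and> d \<in> B) \<or> (a \<in> B \<and> b \<in> A \<and> c \<in> B \<and> d \<in> A)"
        using edgeAB[OF bip y'(2)] edgeAB[OF bip y'(3)] edgeAB[OF bip y'(4)] AnB by blast
      moreover have "(\<Prod>x\<in>g y. w x) = w a * w b * w c * w d" using y' y0 by (simp add: g_def)
      ultimately show "(\<Prod>x\<in>g y. w x) = p^2 * q^2" using AnB unfolding w_def
        by (auto simp: power2_eq_square)
    qed
    finally show ?thesis by simp
  qed
  have e3: "(\<Sum>T\<in>Pow S. wt S w T * real (card T)) = p * real (card Ai) + q * real (card B)"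
  proof -
    have "(\<Sum>T\<in>Pow S. wt S w T * real (card T)) = (\<Sum>T\<in>Pow S. wt S w T * real (card {y\<in>S. (\<lambda>v. {v}) y \<subseteq> T}))"
      by (intro sum.cong refl) (auto intro!: arg_cong[where f=card])
    also have "\<dots> = (\<Sum>y\<in>S. \<Prod>x\<in>{y}. w x)"
      by (rule wt_count) (use finS in auto)
    also have "\<dots> = (\<Sum>y\<in>Ai. w y) + (\<Sum>y\<in>B. w y)"
    proof -
      have "Ai \<inter> B = {}" using ABV AiA by auto
      moreover have "finite Ai" using AiA finA finite_subset by blast
      ultimately show ?thesis unfolding S_def using finB by (simp add: sum.union_disjoint)
    qed
    also have "\<dots> = (\<Sum>y\<in>Ai. p) + (\<Sum>y\<in>B. q)"
      using AiA AnB unfolding w_def by (intro arg_cong2[where f="(+)"] sum.cong) auto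
    also have "\<dots> = p * real (card Ai) + q * real (card B)" by simp
    finally show ?thesis .
  qed
  have esum: "(\<Sum>T\<in>Pow S. wt S w T * \<Phi> T) = p * q * real (card (ES S)) - p^2 * q^2 * real (card Q)
      - c * (p * real (card Ai) + q * real (card B))"
  proof -
    have "(\<Sum>T\<in>Pow S. wt S w T * \<Phi> T) = (\<Sum>T\<in>Pow S. wt S w T * real (card (ES T)))
       - (\<Sum>T\<in>Pow S. wt S w T * real (card {y\<in>Q. g y \<subseteq> T})) - c * (\<Sum>T\<in>Pow S. wt S w T * real (card T))"
      unfolding \<Phi>_def by (simp add: right_diff_distrib sum_subtractf sum_distrib_left mult.left_commute)
    then show ?thesis using e1 e2 e3 by simp
  qed
  have finAi: "finite Ai" using AiA finA finite_subset by blast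
  have X_eq: "X = (\<Sum>a\<in>Ai. real (card (N a)))" unfolding X_def degN by simp
  have F6: "X \<le> real (card (ES S))"
  proof -
    define P where "P = (SIGMA a:Ai. N a)"
    have cP: "card P = (\<Sum>a\<in>Ai. card (N a))" unfolding P_def using finAi finN by simp
    have "inj_on (\<lambda>(a,b). {a,b}) P"
    proof (rule inj_onI)
      fix x y assume xy: "x \<in> P" "y \<in> P" "(\<lambda>(a,b). {a,b}) x = (\<lambda>(a,b). {a,b}) y"
      obtain a b a' b' where ab: "x = (a,b)" "y = (a',b')" by (cases x, cases y) auto
      have "a \<in> A" "a' \<in> A" "b \<in> B" "b' \<in> B" using xy ab AiA NB unfolding P_def by auto
      then show "x = y" using xy ab AnB by (auto simp: doubleton_eq_iff)
    qed
    moreover have "(\<lambda>(a,b). {a,b}) ` P \<subseteq> ES S"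
    proof
      fix e assume "e \<in> (\<lambda>(a,b). {a,b}) ` P"
      then obtain a b where "a \<in> Ai" "b \<in> N a" "e = {a,b}" unfolding P_def by auto
      moreover then have "b \<in> B" using NB AiA by auto
      ultimately show "e \<in> ES S" unfolding ES_def S_def N_def by auto
    qed
    moreover have "finite (ES S)" unfolding ES_def using finE by simp
    ultimately have "card P \<le> card (ES S)" by (rule card_inj_on_le)
    then show ?thesis unfolding X_eq using cP by (simp flip: of_nat_sum)
  qed
  have F7: "K * real (card Ai) \<le> X"
  proof -
    have "K * real (card Ai) = (\<Sum>a\<in>Ai. K)" by simp
    also have "\<dots> \<le> X" unfolding X_def using degs by (intro sum_mono) auto
    finally show ?thesis .
  qed
  have F8: "real (card Q) \<le> 4 * K * lam * X"
  proof -
    define Q1 where "Q1 = {y\<in>Q. fst y \<in> A}"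
    define Q2 where "Q2 = {y\<in>Q. fst y \<notin> A}"
    define rot where "rot y = (case y of (a,b,c,d) \<Rightarrow> (b,c,d,a))" for y :: "'a \<times> 'a \<times> 'a \<times> 'a"
    define CN where "CN b d = {z. {b,z}\<in>E \<and> {d,z}\<in>E}" for b d
    define W where "W = (SIGMA a:Ai. SIGMA bd:{bd \<in> N a \<times> N a. fst bd \<noteq> snd bd}. CN (fst bd) (snd bd))"
    define h where "h x = (case x of (a,bd,c) \<Rightarrow> (a, fst bd, c, snd bd))" for x :: "'a \<times> ('a \<times> 'a) \<times> 'a"
    have cQ: "card Q = card Q1 + card Q2"
    proof -
      have "Q = Q1 \<union> Q2" "Q1 \<inter> Q2 = {}" unfolding Q1_def Q2_def by auto
      moreover have "finite Q1" "finite Q2" using finQ unfolding Q1_def Q2_def by auto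
      ultimately show ?thesis by (simp add: card_Un_disjoint)
    qed
    have cQ2: "card Q2 \<le> card Q1"
    proof (rule card_inj_on_le[of rot])
      show "inj_on rot Q2" unfolding rot_def by (rule inj_onI) auto
      show "rot ` Q2 \<subseteq> Q1"
      proof
        fix z assume "z \<in> rot ` Q2"
        then obtain a b c d where z: "z = (b,c,d,a)" "(a,b,c,d) \<in> Q" "a \<notin> A"
          unfolding rot_def Q2_def by auto
        then have a4: "distinct [a,b,c,d]" "{a,b}\<in>E" "{b,c}\<in>E" "{c,d}\<in>E" "{d,a}\<in>E" "{a,b,c,d} \<subseteq> S"
          unfolding Q_def by auto
        have "b \<in> A" using edgeAB[OF bip a4(2)] z(3) by auto
        moreover have "(b,c,d,a) \<in> Q" using a4 unfolding Q_def by auto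
        ultimately show "z \<in> Q1" using z unfolding Q1_def by auto
      qed
      show "finite Q1" using finQ unfolding Q1_def by auto
    qed
    have finCN: "finite (CN b d)" for b d
    proof -
      have "CN b d \<subseteq> V" unfolding CN_def using EV by auto
      then show ?thesis using finV finite_subset by blast
    qed
    have finW: "finite W" unfolding W_def using finAi finN finCN
      by (intro finite_SigmaI) (auto intro: finite_subset[of _ "N _ \<times> N _"])
    have cQ1: "card Q1 \<le> card W"
    proof -
      have "Q1 \<subseteq> h ` W"
      proof
        fix y assume y: "y \<in> Q1"
        obtain a b c d where y0: "y = (a,b,c,d)" by (cases y) auto
        then have a4: "distinct [a,b,c,d]" "{a,b}\<in>E" "{b,c}\<in>E" "{c,d}\<in>E" "{d,a}\<in>E" "{a,b,c,d} \<subseteq> S" "a \<in> A"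
          using y unfolding Q1_def Q_def by auto
        have "a \<in> Ai" using a4(6,7) AnB unfolding S_def by auto
        moreover have "b \<in> N a" "d \<in> N a" using a4 unfolding N_def by (auto simp: insert_commute)
        moreover have "c \<in> CN b d" using a4 unfolding CN_def by (auto simp: insert_commute)
        ultimately have "(a,(b,d),c) \<in> W" using a4(1) unfolding W_def by auto
        moreover have "y = h (a,(b,d),c)" using y0 unfolding h_def by simp
        ultimately show "y \<in> h ` W" by blast
      qed
      then have "card Q1 \<le> card (h ` W)" using finW by (intro card_mono) auto
      also have "\<dots> \<le> card W" using finW by (rule card_image_le)
      finally show ?thesis .
    qed
    have cW: "real (card W) \<le> 2 * K * lam * X"
    proof -
      have "real (card W) = (\<Sum>a\<in>Ai. \<Sum>bd\<in>{bd \<in> N a \<times> N a. fst bd \<noteq> snd bd}. real (card (CN (fst bd) (snd bd))))"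
        unfolding W_def using finAi finN finCN
        by (subst card_SigmaI) (auto simp: card_SigmaI intro: finite_subset[of _ "N _ \<times> N _"])
      also have "\<dots> \<le> (\<Sum>a\<in>Ai. \<Sum>bd\<in>{bd \<in> N a \<times> N a. fst bd \<noteq> snd bd}. lam)"
      proof (intro sum_mono)
        fix a bd assume a: "a \<in> Ai" and bd: "bd \<in> {bd \<in> N a \<times> N a. fst bd \<noteq> snd bd}"
        have "fst bd \<in> B" "snd bd \<in> B" using a bd NB AiA by auto
        then show "real (card (CN (fst bd) (snd bd))) \<le> lam"
          using cod bd unfolding CN_def codegree_def by auto
      qed
      also have "\<dots> \<le> (\<Sum>a\<in>Ai. lam * real (card (N a)) ^ 2)"
      proof (intro sum_mono)
        fix a assume "a \<in> Ai"
        have "card {bd \<in> N a \<times> N a. fst bd \<noteq> snd bd} \<le> card (N a \<times> N a)"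
          using finN by (intro card_mono) auto
        then have "real (card {bd \<in> N a \<times> N a. fst bd \<noteq> snd bd}) \<le> real (card (N a)) ^ 2"
          by (simp add: card_cartesian_product power2_eq_square flip: of_nat_mult)
        then show "(\<Sum>bd\<in>{bd \<in> N a \<times> N a. fst bd \<noteq> snd bd}. lam) \<le> lam * real (card (N a)) ^ 2"
          using lampos by (simp add: mult_left_mono mult.commute)
      qed
      also have "\<dots> \<le> (\<Sum>a\<in>Ai. lam * (2 * K * real (card (N a))))"
      proof (intro sum_mono mult_left_mono lampos)
        fix a assume "a \<in> Ai"
        then have "real (card (N a)) \<le> 2 * K" using degs degN by (metis less_eq_real_def)
        then show "real (card (N a)) ^ 2 \<le> 2 * K * real (card (N a))"
          by (simp add: power2_eq_square mult_right_mono)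
      qed
      also have "\<dots> = 2 * K * lam * X" unfolding X_eq by (simp add: sum_distrib_left algebra_simps)
      finally show ?thesis .
    qed
    show ?thesis using cQ cQ2 cQ1 cW by linarith
  qed
  have pq0: "0 \<le> p * q" using p01 q01 by simp
  have pos: "(\<Sum>T\<in>Pow S. wt S w T * \<Phi> T) > 0"
  proof -
    have "p * q * X \<le> p * q * real (card (ES S))" using F6 pq0 by (rule mult_left_mono)
    moreover have "p^2 * q^2 * real (card Q) \<le> p^2 * q^2 * (4 * K * lam * X)"
      using F8 by (intro mult_left_mono) auto
    moreover have "p * real (card Ai) \<le> p * X / K"
    proof -
      have "real (card Ai) \<le> X / K" using F7 Kpos by (simp add: field_simps mult.commute)
      then show ?thesis using p01 by (metis mult_left_mono times_divide_eq_right)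
    qed
    then have "c * (p * real (card Ai) + q * real (card B)) \<le> c * (p * X / K + q * real (card B))"
      using cpos by (intro mult_left_mono) auto
    ultimately show ?thesis using obj unfolding esum X_def by linarith
  qed
  have "\<exists>T\<in>Pow S. \<Phi> T > 0"
  proof (rule ccontr)
    assume "\<not> ?thesis"
    then have "\<forall>T\<in>Pow S. \<Phi> T \<le> 0" by (simp add: not_less)
    then have "(\<Sum>T\<in>Pow S. wt S w T * \<Phi> T) \<le> 0"
      by (intro sum_nonpos mult_nonneg_nonpos wt_nonneg) (use w01 in auto)
    then show False using pos by simp
  qed
  then obtain T where T: "T \<in> Pow S" "\<Phi> T > 0" by blast
  define f where "f y = (case y of (a,b,c,d) \<Rightarrow> {a,b})" for y :: "'a \<times> 'a \<times> 'a \<times> 'a"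
  define DT where "DT = {y\<in>Q. g y \<subseteq> T}"
  define E' where "E' = ES T - f ` DT"
  have finT: "finite T" using T(1) finS finite_subset by auto
  have finDT: "finite DT" unfolding DT_def using finQ by simp
  have finET: "finite (ES T)" unfolding ES_def using finE by simp
  have "card (ES T) - card (f ` DT) \<le> card E'" unfolding E'_def by (rule diff_card_le_card_Diff) (simp add: finDT)
  moreover have "card (f ` DT) \<le> card DT" using finDT by (rule card_image_le)
  ultimately have "real (card (ES T)) - real (card DT) \<le> real (card E')" by linarith
  then have big: "real (card E') > c * real (card T)" using T(2) unfolding \<Phi>_def DT_def by linarith
  have "subgraph T E' V E" unfolding subgraph_def E'_def ES_def using T(1) SV by auto
  moreover have "C4_free E'"
    unfolding C4_free_def
  proof
    assume "\<exists>a b c d. distinct [a, b, c, d] \<and> {a, b} \<in> E' \<and> {b, c} \<in> E' \<and> {c, d} \<in> E' \<and> {d, a} \<in> E'"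
    then obtain a b c d where h: "distinct [a, b, c, d]" "{a, b} \<in> E'" "{b, c} \<in> E'" "{c, d} \<in> E'" "{d, a} \<in> E'"
      by blast
    then have "{a,b,c,d} \<subseteq> T" "{a,b}\<in>E" "{b,c}\<in>E" "{c,d}\<in>E" "{d,a}\<in>E"
      unfolding E'_def ES_def by auto
    then have "(a,b,c,d) \<in> DT" using h(1) T(1) unfolding DT_def Q_def g_def by auto
    then have "{a,b} \<in> f ` DT" unfolding f_def by force
    then show False using h(2) unfolding E'_def by auto
  qed
  moreover have "avg_degree T E' \<ge> 2 * c"
  proof -
    have "E' \<noteq> {}" using big cpos by (metis card.empty of_nat_0 mult_nonneg_nonneg of_nat_0_le_iff not_less)
    then obtain e where "e \<in> E'" by blast
    then have "e \<subseteq> T" "e \<in> E" unfolding E'_def ES_def by auto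
    then have "T \<noteq> {}" using G unfolding graph_def by (metis \<open>e \<in> E\<close> empty_iff insertI1 subset_empty)
    then have Tpos: "real (card T) > 0" using finT by (simp add: card_gt_0_iff)
    have "2 * c * real (card T) \<le> 2 * real (card E')" using big by linarith
    then show ?thesis unfolding avg_degree_def using Tpos by (simp add: field_simps)
  qed
  ultimately show ?thesis by blast
qed



lemma asy: "eventually (\<lambda>d::real. 128 * (log 2 d + 1) < d powr (1/20)) at_top"
  by real_asymp

lemma pigeon:
  fixes f :: "nat \<Rightarrow> real"
  shows "\<exists>i\<le>I. f i \<ge> (\<Sum>j\<le>I. f j) / (real I + 1)"
proof (rule ccontr)
  assume "\<not> ?thesis"
  then have "\<forall>i\<in>{..I}. f i < (\<Sum>j\<le>I. f j) / (real I + 1)" by (auto simp: not_le) (meson not_le)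
  then have "(\<Sum>i\<le>I. f i) < (\<Sum>i\<le>I. (\<Sum>j\<le>I. f j) / (real I + 1))"
    by (intro sum_strict_mono) auto
  also have "\<dots> = (\<Sum>j\<le>I. f j)" by (simp add: add.commute)
  finally show False by simp
qed

lemma main_fixed:
  fixes d :: real
  assumes d1024: "d \<ge> 1024" and dasy: "128 * (log 2 d + 1) < d powr (1/20)"
    and G: "graph V E" and bip: "bipartite_with V E A B"
    and cod: "\<forall>x\<in>B. \<forall>y\<in>B. x \<noteq> y \<longrightarrow> real (codegree E x y) \<le> d powr (1/5)"
    and degA: "\<forall>x\<in>A. real (degree E x) \<le> d"
    and avg: "avg_degree V E \<ge> d powr (3/4)"
  shows "\<exists>V' E'. subgraph V' E' V E \<and> C4_free E' \<and> avg_degree V' E' \<ge> d powr (1/4)"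
proof -
  define lam where "lam = d powr (1/5)"
  define c where "c = d powr (1/4) / 2"
  define dg where "dg a = real (degree E a)" for a
  define N where "N a = {y. {a,y} \<in> E}" for a
  define K0 where "K0 = d powr (3/4) / 4"
  define H where "H = {a\<in>A. K0 \<le> dg a}"
  define I where "I = floor_log (nat \<lfloor>d\<rfloor>)"
  define cls where "cls a = floor_log (degree E a)" for a
  have dpos: "d > 0" using d1024 by simp
  have finV: "finite V" using G unfolding graph_def by auto
  have EV: "e \<subseteq> V" if "e \<in> E" for e using G that unfolding graph_def by auto
  have finE: "finite E" by (rule finite_subset[of E "Pow V"]) (use EV finV in auto)
  have ABV: "A \<union> B = V" "A \<inter> B = {}" using bip unfolding bipartite_with_def by auto
  have bipE: "\<forall>e\<in>E. \<exists>a\<in>A. \<exists>b\<in>B. e = {a, b}" using bip unfolding bipartite_with_def by auto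
  have finA: "finite A" and finB: "finite B" using ABV finV by auto
  have finN: "finite (N a)" for a
  proof -
    have "N a \<subseteq> V" unfolding N_def using EV by auto
    then show ?thesis using finV finite_subset by blast
  qed
  have degN: "degree E a = card (N a)" for a unfolding degree_def N_def by simp
  have cardV: "card V = card A + card B" using ABV finA finB by (metis card_Un_disjoint)
  have Esum: "card E \<le> (\<Sum>a\<in>A. degree E a)"
  proof -
    have "E \<subseteq> (\<lambda>(a,b). {a,b}) ` (SIGMA a:A. N a)"
    proof
      fix e assume "e \<in> E"
      then obtain a b where "a \<in> A" "b \<in> B" "e = {a,b}" using bipE by blast
      then show "e \<in> (\<lambda>(a,b). {a,b}) ` (SIGMA a:A. N a)" using \<open>e \<in> E\<close> unfolding N_def by force
    qed
    then have "card E \<le> card ((\<lambda>(a,b). {a,b}) ` (SIGMA a:A. N a))"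
      using finA finN by (intro card_mono) auto
    also have "\<dots> \<le> card (SIGMA a:A. N a)" using finA finN by (intro card_image_le) auto
    also have "\<dots> = (\<Sum>a\<in>A. degree E a)" using finA finN by (simp add: degN)
    finally show ?thesis .
  qed
  have Epos: "card E > 0"
  proof (rule ccontr)
    assume "\<not> ?thesis"
    then have "avg_degree V E = 0" unfolding avg_degree_def by simp
    moreover have "d powr (3/4) > 0" using dpos by simp
    ultimately show False using avg by simp
  qed
  have mpos: "card B > 0"
  proof -
    have "E \<noteq> {}" using Epos by auto
    then obtain e where e: "e \<in> E" by blast
    from bipE e obtain a b where "a \<in> A" "b \<in> B" "e = {a,b}" by blast
    then have "B \<noteq> {}" by auto
    then show ?thesis using finB by (simp add: card_gt_0_iff)
  qed
  have avg2: "d powr (3/4) * (real (card A) + real (card B)) \<le> 2 * real (card E)"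
  proof -
    have "real (card V) > 0" using cardV mpos by simp
    moreover have "d powr (3/4) \<le> 2 * real (card E) / real (card V)" using avg unfolding avg_degree_def .
    ultimately have "d powr (3/4) * real (card V) \<le> 2 * real (card E)" by (simp add: pos_le_divide_eq)
    then show ?thesis using cardV by simp
  qed
  have sumH: "(\<Sum>a\<in>H. dg a) \<ge> d powr (3/4) * real (card B) / 2"
  proof -
    have "(\<Sum>a\<in>A. dg a) = (\<Sum>a\<in>H. dg a) + (\<Sum>a\<in>A-H. dg a)"
    proof -
      have "H \<subseteq> A" unfolding H_def by auto
      then show ?thesis using finA by (simp add: sum.subset_diff)
    qed
    moreover have "(\<Sum>a\<in>A-H. dg a) \<le> (\<Sum>a\<in>A-H. K0)"
      by (intro sum_mono) (auto simp: H_def)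
    moreover have "(\<Sum>a\<in>A-H. K0) \<le> K0 * real (card A)"
    proof -
      have "card (A - H) \<le> card A" using finA by (intro card_mono) auto
      moreover have "K0 \<ge> 0" unfolding K0_def by simp
      ultimately show ?thesis by (simp add: mult_left_mono mult.commute)
    qed
    moreover have "real (card E) \<le> (\<Sum>a\<in>A. dg a)" using Esum unfolding dg_def by (simp flip: of_nat_sum)
    ultimately have "(\<Sum>a\<in>H. dg a) \<ge> real (card E) - K0 * real (card A)" by linarith
    moreover have "K0 * real (card A) = d powr (3/4) * real (card A) / 4" unfolding K0_def by simp
    moreover have "d powr (3/4) * real (card A) \<ge> 0" by simp
    moreover have "d powr (3/4) * real (card A) + d powr (3/4) * real (card B) \<le> 2 * real (card E)"
      using avg2 by (simp add: distrib_left)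
    ultimately show ?thesis by linarith
  qed
  have dge1: "d \<ge> 1" using d1024 by simp
  have K0pos: "K0 > 0" unfolding K0_def using dpos by simp
  have nd: "nat \<lfloor>d\<rfloor> \<ge> 1" using d1024 by linarith
  have Ilog: "real I \<le> log 2 d"
  proof -
    have "real I = real (nat \<lfloor>log 2 (real (nat \<lfloor>d\<rfloor>))\<rfloor>)"
      unfolding I_def using nd dge1 by (simp add: floor_log_altdef)
    also have "\<dots> \<le> log 2 (real (nat \<lfloor>d\<rfloor>))"
    proof -
      have "log 2 (real (nat \<lfloor>d\<rfloor>)) \<ge> 0" using nd dge1 by (subst zero_le_log_cancel_iff) auto
      then show ?thesis by linarith
    qed
    also have "\<dots> \<le> log 2 d" using nd dpos dge1 by (subst log_le_cancel_iff) (auto simp: of_nat_floor)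
    finally show ?thesis .
  qed
  have Ibound: "128 * (real I + 1) < d powr (1/20)" using Ilog dasy by (meson add_le_cancel_right le_less_trans mult_le_cancel_left_pos zero_less_numeral)
  have clsI: "cls a \<le> I" if "a \<in> H" for a
  proof -
    have "real (degree E a) \<le> d" using that degA unfolding H_def by auto
    then have "degree E a \<le> nat \<lfloor>d\<rfloor>" by (rule le_nat_floor)
    then show ?thesis unfolding cls_def I_def by (rule floor_log_le_iff)
  qed
  have finH: "finite H" unfolding H_def using finA by simp
  have grp: "(\<Sum>i\<le>I. \<Sum>a\<in>{x\<in>H. cls x = i}. dg a) = (\<Sum>a\<in>H. dg a)"
    by (rule sum.group) (use finH clsI in auto)
  obtain i where "i \<le> I" and iX: "(\<Sum>a\<in>{x\<in>H. cls x = i}. dg a) \<ge> (\<Sum>a\<in>H. dg a) / (real I + 1)"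
    using pigeon[where f="\<lambda>i. \<Sum>a\<in>{x\<in>H. cls x = i}. dg a" and I=I] unfolding grp by blast
  define Ai where "Ai = {x\<in>H. cls x = i}"
  define X where "X = (\<Sum>a\<in>Ai. dg a)"
  define m where "m = real (card B)"
  have mpos': "m > 0" unfolding m_def using mpos by simp
  have d720: "d powr (3/4) = d powr (1/20) * d powr (7/10)" by (simp add: flip: powr_add)
  have d7pos: "d powr (7/10) > 0" using dpos by simp
  have Xbig: "X > 64 * d powr (7/10) * m"
  proof -
    have "X * (real I + 1) \<ge> (\<Sum>a\<in>H. dg a)" using iX unfolding X_def Ai_def
      by (simp add: divide_le_eq add_pos_nonneg)
    then have "X * (real I + 1) * 2 \<ge> d powr (3/4) * m" using sumH unfolding m_def by linarith
    moreover have "d powr (3/4) * m > 128 * (real I + 1) * d powr (7/10) * m"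
      unfolding d720 using Ibound d7pos mpos' by (simp add: mult_strict_right_mono)
    ultimately have "(X * 2) * (real I + 1) > (64 * d powr (7/10) * m) * 2 * (real I + 1)"
      by (simp add: algebra_simps)
    then show ?thesis
    proof -
      assume h: "(X * 2) * (real I + 1) > (64 * d powr (7/10) * m) * 2 * (real I + 1)"
      show ?thesis
      proof (rule ccontr)
        assume "\<not> ?thesis"
        then have "X * 2 \<le> 64 * d powr (7/10) * m * 2" by (simp add: not_less mult_ac)
        then have "(X * 2) * (real I + 1) \<le> (64 * d powr (7/10) * m * 2) * (real I + 1)"
          by (intro mult_right_mono) (auto simp: mult_ac)
        then show False using h by linarith
      qed
    qed
  qed
  have AiA: "Ai \<subseteq> A" unfolding Ai_def H_def by auto
  define K where "K = (2::real) ^ i"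
  have Kpos: "K > 0" unfolding K_def by simp
  have degs: "\<forall>a\<in>Ai. K \<le> real (degree E a) \<and> real (degree E a) < 2 * K"
  proof
    fix a assume a: "a \<in> Ai"
    then have "dg a \<ge> K0" "cls a = i" unfolding Ai_def H_def by auto
    then have "degree E a > 0" using K0pos unfolding dg_def by linarith
    then have "2 ^ i \<le> degree E a" "degree E a < 2 * 2 ^ i"
      using floor_log_exp2_le floor_log_exp2_gt \<open>cls a = i\<close> unfolding cls_def by auto
    then have "real (2 ^ i) \<le> real (degree E a)" "real (degree E a) < real (2 * 2 ^ i)"
      by (simp only: of_nat_le_iff of_nat_less_iff)+
    then show "K \<le> real (degree E a) \<and> real (degree E a) < 2 * K" unfolding K_def by simp
  qed
  have "Ai \<noteq> {}"
  proof
    assume "Ai = {}"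
    then have "X = 0" unfolding X_def by simp
    moreover have "64 * d powr (7/10) * m > 0" using d7pos mpos' by simp
    ultimately show False using Xbig by linarith
  qed
  then obtain a0 where a0: "a0 \<in> Ai" by blast
  have "K0 \<le> dg a0" using a0 unfolding Ai_def H_def by auto
  moreover have "dg a0 < 2 * K" using a0 degs unfolding dg_def by auto
  ultimately have "K0 < 2 * K" by linarith
  then have KK0: "K > d powr (3/4) / 8" unfolding K0_def by simp
  have d12: "d powr (1/2) \<ge> 32"
  proof -
    have "(1024::real) powr (1/2) \<le> d powr (1/2)" using d1024 by (intro powr_mono2) auto
    moreover have "(1024::real) powr (1/2) = 32"
      by (simp add: powr_half_sqrt)
    ultimately show ?thesis by simp
  qed
  have d14pos: "d powr (1/4) \<ge> 1" using dge1 by (simp add: ge_one_powr_ge_zero)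
  have "d powr (3/4) = d powr (1/2) * d powr (1/4)" by (simp flip: powr_add)
  then have "d powr (3/4) \<ge> 32 * d powr (1/4)" using d12 d14pos by (simp add: mult_right_mono)
  then have K4: "K \<ge> 4 * d powr (1/4)" using KK0 by linarith
  have lampos: "lam \<ge> 1" unfolding lam_def using dge1 by (simp add: ge_one_powr_ge_zero)
  have cpos: "c \<ge> 1/2" unfolding c_def using d14pos by simp
  define p where "p = 1 / (64 * c * lam)"
  define q where "q = 8 * c / K"
  have p01: "0 \<le> p" "p \<le> 1"
  proof -
    have "c * lam \<ge> c * 1" using lampos cpos by (intro mult_left_mono) auto
    then have "64 * c * lam \<ge> 32 * 1" using cpos by linarith
    then show "0 \<le> p" "p \<le> 1" unfolding p_def by auto
  qed
  have q01: "0 \<le> q" "q \<le> 1"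
  proof -
    have "8 * c \<le> K" unfolding c_def using K4 by simp
    then show "0 \<le> q" "q \<le> 1" unfolding q_def using Kpos cpos by auto
  qed
  have c2lam: "c^2 * lam = d powr (7/10) / 4"
  proof -
    have "c^2 = d powr (1/4) * d powr (1/4) / 4" unfolding c_def by (simp add: power2_eq_square)
    also have "\<dots> = d powr (1/2) / 4" by (simp flip: powr_add)
    finally have "c^2 * lam = d powr (1/2) * d powr (1/5) / 4" unfolding lam_def by simp
    also have "\<dots> = d powr (7/10) / 4" by (simp flip: powr_add)
    finally show ?thesis .
  qed
  have lam0: "lam > 0" using lampos by simp
  have c0: "c > 0" using cpos by simp
  have pq: "p * q = 1 / (8 * lam * K)" unfolding p_def q_def using c0 lam0 Kpos by (simp add: field_simps)
  have cp: "c * p = 1 / (64 * lam)" unfolding p_def using c0 lam0 by (simp add: field_simps)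
  have cq: "c * q = 8 * c^2 / K" unfolding q_def using Kpos by (simp add: field_simps power2_eq_square)
  have objeq: "p * q * X - p^2 * q^2 * (4 * K * lam * X) - c * (p * X / K + q * m)
      = (3 * X / (64 * lam) - 8 * c^2 * m) / K"
  proof -
    have "p^2 * q^2 = (p * q)^2" by (simp add: power_mult_distrib)
    moreover have "c * (p * X / K + q * m) = (c * p) * X / K + (c * q) * m" by (simp add: algebra_simps)
    ultimately have "p * q * X - p^2 * q^2 * (4 * K * lam * X) - c * (p * X / K + q * m)
       = (1 / (8 * lam * K)) * X - (1 / (8 * lam * K))^2 * (4 * K * lam * X) - (1 / (64 * lam)) * X / K - (8 * c^2 / K) * m"
      unfolding pq cp cq by simp
    also have "\<dots> = (3 * X / (64 * lam) - 8 * c^2 * m) / K"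
      using lam0 Kpos by (simp add: field_simps power2_eq_square)
    finally show ?thesis .
  qed
  have objpos: "p * q * X - p^2 * q^2 * (4 * K * lam * X) - c * (p * X / K + q * m) > 0"
  proof -
    have "8 * c^2 * m * (64 * lam) = 512 * (c^2 * lam) * m" by (simp add: mult_ac)
    also have "\<dots> = 128 * d powr (7/10) * m" unfolding c2lam by simp
    finally have eq8: "8 * c^2 * m * (64 * lam) = 128 * d powr (7/10) * m" .
    have "64 * d powr (7/10) * m > 0" using d7pos mpos' by simp
    then have "3 * X > 128 * d powr (7/10) * m" using Xbig by linarith
    then have "3 * X > 8 * c^2 * m * (64 * lam)" unfolding eq8 .
    then have "3 * X / (64 * lam) > 8 * c^2 * m" using lam0 by (simp add: field_simps)
    then show ?thesis unfolding objeq using Kpos by simp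
  qed
  have "\<exists>V' E'. subgraph V' E' V E \<and> C4_free E' \<and> avg_degree V' E' \<ge> 2 * c"
  proof -
    have cod': "\<forall>x\<in>B. \<forall>y\<in>B. x \<noteq> y \<longrightarrow> real (codegree E x y) \<le> lam" using cod unfolding lam_def .
    have obj': "p * q * (\<Sum>a\<in>Ai. real (degree E a)) - p^2 * q^2 * (4 * K * lam * (\<Sum>a\<in>Ai. real (degree E a)))
              - c * (p * (\<Sum>a\<in>Ai. real (degree E a)) / K + q * real (card B)) > 0"
      using objpos unfolding X_def dg_def m_def .
    have "lam \<ge> 0" "c \<ge> 0" using lam0 c0 by auto
    from core[OF G bip cod' AiA Kpos degs this p01 q01 obj'] show ?thesis .
  qed
  then show ?thesis unfolding c_def by simp
qed


theorem lemma6: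
  shows "\<exists>d0::real. \<forall>d\<ge>d0. \<forall>(V::nat set) E A B.
     graph V E \<and> bipartite_with V E A B \<and> card A \<ge> card B \<and>
     (\<forall>x\<in>B. \<forall>y\<in>B. x \<noteq> y \<longrightarrow> real (codegree E x y) \<le> d powr (1/5)) \<and>
     (\<forall>x\<in>A. real (degree E x) \<le> d) \<and>
     avg_degree V E \<ge> d powr (3/4)
     \<longrightarrow> (\<exists>V' E'. subgraph V' E' V E \<and> C4_free E' \<and> avg_degree V' E' \<ge> d powr (1/4))"
proof -
  obtain d1 where d1: "\<And>d. d \<ge> d1 \<Longrightarrow> 128 * (log 2 d + 1) < d powr (1/20)"
    using asy unfolding eventually_at_top_linorder by blast
  show ?thesis
  proof (rule exI[of _ "max 1024 d1"], intro allI impI)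
    fix d :: real and V :: "nat set" and E A B
    assume d: "max 1024 d1 \<le> d"
    assume h: "graph V E \<and> bipartite_with V E A B \<and> card A \<ge> card B \<and>
     (\<forall>x\<in>B. \<forall>y\<in>B. x \<noteq> y \<longrightarrow> real (codegree E x y) \<le> d powr (1/5)) \<and>
     (\<forall>x\<in>A. real (degree E x) \<le> d) \<and>
     avg_degree V E \<ge> d powr (3/4)"
    have "d \<ge> 1024" "d \<ge> d1" using d by auto
    then show "\<exists>V' E'. subgraph V' E' V E \<and> C4_free E' \<and> avg_degree V' E' \<ge> d powr (1/4)"
      using main_fixed[of d V E A B] d1 h by blast
  qed
qed

end
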